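(* Let $r>0$ and $s$ be real numbers. Let $e_0,e_1,e_2,\dots$ be independent and identically distributed real random variables with cumulative distribution function $F$ having probability density function $f$. Let $X_0$ be a real random variable such that $(X_0,e_0)$ is independent of $(e_1,e_2,\dots)$, and define $X_i - rX_{i-1} = e_i + s e_{i-1}$ for $i\ge 1$. Fix $x\in\mathbb{R}$, put $M_0=-\infty$, $M_n=\max_{1\le i\le n}X_i$ for $n\ge1$, and $u_n=P(M_n\le x)$ for $n\ge 0$. Let $G_0(\mathbf{y})=P(X_0\le y_0,\ e_0\le y_1)$ for $\mathbf{y}=(y_0,y_1)\in\mathbb{R}^2$. Define the linear operator $\mathcal{K}$ on functions $h$ of $\mathbf{z}=(z_0,z_1)\in\mathbb{R}^2$ by $$\mathcal{K}h(\mathbf{y}) = r\int\int_{a_{\mathbf{y}\mathbf{z}}}^{\infty} dz_0\, f(y_{0x}-rz_0-sz_1)\, h(z_0,dz_1),$$ where $y_{0x}=\min(y_0,x)$, $a_{\mathbf{y}\mathbf{z}}=(y_{0x}-sz_1-y_1)/r$, and $h(z_0,dz_1)$ denotes Lebesgue--Stieltjes integration in $z_1$. Set $a_n=[\mathcal{K}^nG_0(\mathbf{y})]_{\mathbf{y}=(\infty,\infty)}$ for $n\ge 0$. Then $u_n=a_n$ for all $n\ge 0$.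
   Context: Evaluation at $\mathbf{y}=(\infty,\infty)$ means the limit as $y_0\to\infty$ and $y_1\to\infty$. $\mathcal{K}^0$ is the identity, so $a_0=1$. *)

theory Defs
  imports "HOL-Probability.Probability"
begin

definition run_max :: "(nat \<Rightarrow> 'a \<Rightarrow> real) \<Rightarrow> nat \<Rightarrow> 'a \<Rightarrow> ereal" where
  "run_max X n \<omega> = (if n = 0 then -\<infinity> else ereal (Max ((\<lambda>i. X i \<omega>) ` {1..n})))"

text \<open>The inner integral is the Lebesgue--Stieltjes integral in z1 with respect
  to the function z1 |-> h(z0,z1) (via interval_measure, i.e. for monotone right-continuous
  h(z0,.)), restricted to z0 > a_{yz}; the outer integral is the Lebesgue integral in z0.\<close>
definition Kop :: "real \<Rightarrow> real \<Rightarrow> (real \<Rightarrow> real) \<Rightarrow> real \<Rightarrow>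
    (real \<times> real \<Rightarrow> real) \<Rightarrow> real \<times> real \<Rightarrow> real" where
  "Kop r s f x h y =
     r * (\<integral>z0. (\<integral>z1. indicator {z1. (min (fst y) x - s * z1 - snd y) / r < z0} z1
                        * f (min (fst y) x - r * z0 - s * z1)
                 \<partial>(interval_measure (\<lambda>z1. h (z0, z1)))) \<partial>lborel)"

end

theory Submission
  imports Defs
begin


fun es :: "real \<times> real \<Rightarrow> (nat \<Rightarrow> real) \<Rightarrow> nat \<Rightarrow> real" where
  "es z u 0 = snd z"
| "es z u (Suc k) = u k"

fun xs :: "real \<Rightarrow> real \<Rightarrow> real \<times> real \<Rightarrow> (nat \<Rightarrow> real) \<Rightarrow> nat \<Rightarrow> real" where
  "xs r s z u 0 = fst z"
| "xs r s z u (Suc k) = r * xs r s z u k + u k + s * es z u k"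

definition tr :: "nat \<Rightarrow> (nat \<Rightarrow> real) \<Rightarrow> nat \<Rightarrow> real" where
  "tr n u = (\<lambda>i. if i < n then u i else 0)"

lemma tr_lt: "i < n \<Longrightarrow> tr n u i = u i"
  by (simp add: tr_def)

lemma es_tr: "k \<le> n \<Longrightarrow> es z (tr n u) k = es z u k"
  by (cases k) (auto simp: tr_lt)

lemma xs_tr: "k \<le> n \<Longrightarrow> xs r s z (tr n u) k = xs r s z u k"
  by (induction k) (auto simp: es_tr tr_lt)

lemma es_meas[measurable]: "(\<lambda>p. es (fst p) (snd p) k) \<in> borel_measurable ((borel \<Otimes>\<^sub>M borel) \<Otimes>\<^sub>M PiM UNIV (\<lambda>_. borel))"
  by (cases k) simp_all

lemma xs_meas[measurable]: "(\<lambda>p. xs r s (fst p) (snd p) k) \<in> borel_measurable ((borel \<Otimes>\<^sub>M borel) \<Otimes>\<^sub>M PiM UNIV (\<lambda>_. borel))"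
  by (induction k) simp_all

lemma tr_meas[measurable]: "tr n \<in> PiM UNIV (\<lambda>_. borel) \<rightarrow>\<^sub>M PiM UNIV (\<lambda>_. (borel::real measure))"
  by (rule measurable_PiM_single') (auto simp: tr_def)

definition shiftn :: "nat \<Rightarrow> (nat \<Rightarrow> real) \<Rightarrow> nat \<Rightarrow> real" where
  "shiftn n w = (\<lambda>i. if i < n then w (Suc i) else 0)"

lemma shiftn_meas[measurable]: "shiftn n \<in> PiM {1..n} (\<lambda>_. borel) \<rightarrow>\<^sub>M PiM UNIV (\<lambda>_. (borel::real measure))"
  unfolding shiftn_def
proof (rule measurable_PiM_single')
  fix i :: nat show "(\<lambda>w. (\<lambda>i. if i < n then w (Suc i) else 0) i) \<in> borel_measurable (PiM {1..n} (\<lambda>_. borel))"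
    by (cases "i < n") (auto intro!: measurable_component_singleton)
qed auto

lemma interval_measure_cdf:
  assumes "finite_borel_measure N"
  shows "interval_measure (cdf N) = N"
proof -
  interpret finite_borel_measure N by fact
  have fb: "finite_borel_measure (interval_measure (cdf N))"
    by (rule finite_borel_measure_interval_measure[OF cdf_nondecreasing cdf_is_right_cont cdf_lim_at_bot cdf_lim_at_top])
       (auto simp: measure_nonneg)
  show ?thesis
    by (rule cdf_unique'[OF fb assms])
       (simp add: cdf_interval_measure cdf_nondecreasing cdf_is_right_cont cdf_lim_at_bot)
qed

lemma (in prob_space) indep_nn_integral:
  assumes rv[measurable]: "X \<in> M \<rightarrow>\<^sub>M S" "Y \<in> M \<rightarrow>\<^sub>M T"
    and ind: "\<And>A B. A \<in> sets S \<Longrightarrow> B \<in> sets T \<Longrightarrow>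
       prob ((\<lambda>x. (X x, Y x)) -` (A \<times> B) \<inter> space M) = prob (X -` A \<inter> space M) * prob (Y -` B \<inter> space M)"
    and h[measurable]: "h \<in> borel_measurable (S \<Otimes>\<^sub>M T)"
  shows "(\<integral>\<^sup>+\<omega>. h (X \<omega>, Y \<omega>) \<partial>M) = (\<integral>\<^sup>+a. \<integral>\<^sup>+b. h (a, b) \<partial>distr M T Y \<partial>distr M S X)"
proof -
  interpret PX: prob_space "distr M S X" by (rule prob_space_distr) fact
  interpret PY: prob_space "distr M T Y" by (rule prob_space_distr) fact
  interpret P: pair_sigma_finite "distr M S X" "distr M T Y" ..
  have XY[measurable]: "(\<lambda>\<omega>. (X \<omega>, Y \<omega>)) \<in> M \<rightarrow>\<^sub>M S \<Otimes>\<^sub>M T" by measurable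
  have "(\<integral>\<^sup>+\<omega>. h (X \<omega>, Y \<omega>) \<partial>M) = (\<integral>\<^sup>+p. h p \<partial>distr M (S \<Otimes>\<^sub>M T) (\<lambda>\<omega>. (X \<omega>, Y \<omega>)))"
    by (subst nn_integral_distr) auto
  also have "distr M (S \<Otimes>\<^sub>M T) (\<lambda>\<omega>. (X \<omega>, Y \<omega>)) = distr M S X \<Otimes>\<^sub>M distr M T Y"
  proof (rule pair_measure_eqI[symmetric])
    show "sigma_finite_measure (distr M S X)" "sigma_finite_measure (distr M T Y)" ..
    show "sets (distr M S X \<Otimes>\<^sub>M distr M T Y) = sets (distr M (S \<Otimes>\<^sub>M T) (\<lambda>\<omega>. (X \<omega>, Y \<omega>)))"
      by simp
    fix A B assume A: "A \<in> sets (distr M S X)" and B: "B \<in> sets (distr M T Y)"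
    then have [measurable]: "A \<in> sets S" "B \<in> sets T" by auto
    have "emeasure (distr M (S \<Otimes>\<^sub>M T) (\<lambda>x. (X x, Y x))) (A \<times> B) = emeasure M ((\<lambda>x. (X x, Y x)) -` (A \<times> B) \<inter> space M)"
      by (intro emeasure_distr) auto
    also have "\<dots> = emeasure M (X -` A \<inter> space M) * emeasure M (Y -` B \<inter> space M)"
      using ind[of A B] by (simp add: emeasure_eq_measure ennreal_mult')
    finally show "emeasure (distr M S X) A * emeasure (distr M T Y) B = emeasure (distr M (S \<Otimes>\<^sub>M T) (\<lambda>x. (X x, Y x))) (A \<times> B)"
      by (simp add: emeasure_distr)
  qed
  also have "(\<integral>\<^sup>+p. h p \<partial>(distr M S X \<Otimes>\<^sub>M distr M T Y)) = (\<integral>\<^sup>+a. \<integral>\<^sup>+b. h (a, b) \<partial>distr M T Y \<partial>distr M S X)"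
    by (rule PY.nn_integral_fst[symmetric]) simp
  finally show ?thesis .
qed




locale ARS = prob_space M for M :: "'a measure" +
  fixes r s x :: real and f :: "real \<Rightarrow> real" and e X :: "nat \<Rightarrow> 'a \<Rightarrow> real"
  assumes r: "r > 0"
    and fnn: "\<And>t. f t \<ge> 0" and fm[measurable]: "f \<in> borel_measurable borel"
    and dist: "\<And>i. distributed M lborel (e i) (\<lambda>t. ennreal (f t))"
    and indv: "indep_vars (\<lambda>_. borel) e UNIV"
    and X0m[measurable]: "X 0 \<in> borel_measurable M"
    and inds: "indep_set
           {(\<lambda>\<omega>. (X 0 \<omega>, e 0 \<omega>)) -` A \<inter> space M | A. A \<in> sets (borel :: (real \<times> real) measure)}
           {(\<lambda>\<omega> i. e (Suc i) \<omega>) -` A \<inter> space M | A. A \<in> sets (PiM (UNIV :: nat set) (\<lambda>_. borel :: real measure))}"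
    and recX: "\<And>i \<omega>. \<omega> \<in> space M \<Longrightarrow> X (Suc i) \<omega> - r * X i \<omega> = e (Suc i) \<omega> + s * e i \<omega>"
begin

lemma e_meas[measurable]: "e i \<in> borel_measurable M"
  using distributed_measurable[OF dist[of i]] by (simp add: measurable_lborel1)

definition "Zv \<omega> = (X 0 \<omega>, e 0 \<omega>)"
definition "Ev \<omega> = (\<lambda>i. e (Suc i) \<omega>)"

lemma Zv_meas[measurable]: "Zv \<in> M \<rightarrow>\<^sub>M borel \<Otimes>\<^sub>M borel"
  unfolding Zv_def by measurable

lemma Ev_meas[measurable]: "Ev \<in> M \<rightarrow>\<^sub>M PiM UNIV (\<lambda>_. borel)"
  unfolding Ev_def by (rule measurable_PiM_single') auto

lemma X_eq: "\<omega> \<in> space M \<Longrightarrow> X k \<omega> = xs r s (Zv \<omega>) (Ev \<omega>) k"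
proof (induction k)
  case 0 then show ?case by (simp add: Zv_def)
next
  case (Suc k)
  have "es (Zv \<omega>) (Ev \<omega>) k = e k \<omega>" by (cases k) (auto simp: Zv_def Ev_def)
  with recX[OF Suc.prems, of k] Suc show ?case by (simp add: Ev_def algebra_simps)
qed

lemma e_eq: "e k \<omega> = es (Zv \<omega>) (Ev \<omega>) k"
  by (cases k) (auto simp: Zv_def Ev_def)

lemma X_meas[measurable]: "X k \<in> borel_measurable M"
proof -
  have "(\<lambda>\<omega>. xs r s (fst (Zv \<omega>, Ev \<omega>)) (snd (Zv \<omega>, Ev \<omega>)) k) \<in> borel_measurable M"
    by measurable
  then show ?thesis by (rule measurable_cong[THEN iffD1, rotated]) (simp add: X_eq)
qed

lemma indZE: "A \<in> sets (borel \<Otimes>\<^sub>M borel) \<Longrightarrow> B \<in> sets (PiM UNIV (\<lambda>_. borel)) \<Longrightarrow>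
   prob ((\<lambda>x. (Zv x, Ev x)) -` (A \<times> B) \<inter> space M) = prob (Zv -` A \<inter> space M) * prob (Ev -` B \<inter> space M)"
proof -
  assume A: "A \<in> sets (borel \<Otimes>\<^sub>M borel)" and B: "B \<in> sets (PiM UNIV (\<lambda>_. borel))"
  have "(\<lambda>x. (Zv x, Ev x)) -` (A \<times> B) \<inter> space M = (Zv -` A \<inter> space M) \<inter> (Ev -` B \<inter> space M)" by auto
  moreover have "prob ((Zv -` A \<inter> space M) \<inter> (Ev -` B \<inter> space M)) = prob (Zv -` A \<inter> space M) * prob (Ev -` B \<inter> space M)"
    using inds A B unfolding indep_sets2_eq borel_prod Zv_def[abs_def] Ev_def[abs_def] by blast
  ultimately show ?thesis by simp
qed

lemma indR: "indep_var (PiM {1..n} (\<lambda>_. borel)) (\<lambda>\<omega>. restrict (\<lambda>i. e i \<omega>) {1..n})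
          (PiM {Suc n} (\<lambda>_. borel)) (\<lambda>\<omega>. restrict (\<lambda>i. e i \<omega>) {Suc n})"
    by (rule indep_var_restrict[OF indv]) auto

definition "Fe q = (\<integral>\<^sup>+u. (if u \<le> q then ennreal (f u) else 0) \<partial>lborel)"

lemma Fe_meas[measurable]: "Fe \<in> borel_measurable borel"
  unfolding Fe_def by measurable

lemma emeasure_e_le: "emeasure M {\<omega> \<in> space M. e k \<omega> \<le> q} = Fe q"
proof -
  have "emeasure M {\<omega> \<in> space M. e k \<omega> \<le> q} = emeasure (distr M lborel (e k)) {..q}"
    by (subst emeasure_distr) (auto intro: arg_cong2[where f=emeasure])
  also have "distr M lborel (e k) = density lborel f"
    using dist[of k] by (simp add: distributed_def)
  also have "emeasure (density lborel f) {..q} = Fe q"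
    by (subst emeasure_density) (auto simp: Fe_def intro!: nn_integral_cong split: split_indicator)
  finally show ?thesis .
qed

end


context ARS begin

lemma Ind:
  assumes Qm: "Measurable.pred ((borel \<Otimes>\<^sub>M borel) \<Otimes>\<^sub>M PiM UNIV (\<lambda>_. borel)) (\<lambda>(z,u). Q z u)"
    and \<phi>m: "(\<lambda>(z,u). \<phi> z u) \<in> borel_measurable ((borel \<Otimes>\<^sub>M borel) \<Otimes>\<^sub>M PiM UNIV (\<lambda>_. borel))"
    and Qt: "\<And>z u. Q z (tr n u) = Q z u" and \<phi>t: "\<And>z u. \<phi> z (tr n u) = \<phi> z u"
  shows "(\<integral>\<^sup>+\<omega>. (if Q (Zv \<omega>) (Ev \<omega>) then Fe (\<phi> (Zv \<omega>) (Ev \<omega>)) else 0) \<partial>M)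
       = emeasure M {\<omega>\<in>space M. Q (Zv \<omega>) (Ev \<omega>) \<and> e (Suc n) \<omega> \<le> \<phi> (Zv \<omega>) (Ev \<omega>)}"
proof -
  let ?PZ = "distr M (borel \<Otimes>\<^sub>M borel) Zv" and ?PE = "distr M (PiM UNIV (\<lambda>_. borel)) Ev"
  let ?R1 = "\<lambda>\<omega>. restrict (\<lambda>i. e i \<omega>) {1..n}" and ?R2 = "\<lambda>\<omega>. restrict (\<lambda>i. e i \<omega>) {Suc n}"
  have R1m[measurable]: "?R1 \<in> M \<rightarrow>\<^sub>M PiM {1..n} (\<lambda>_. borel)" by measurable
  have R2m[measurable]: "?R2 \<in> M \<rightarrow>\<^sub>M PiM {Suc n} (\<lambda>_. borel)" by measurable
  have trE: "\<And>\<omega>. tr n (Ev \<omega>) = shiftn n (?R1 \<omega>)" by (auto simp: fun_eq_iff tr_def Ev_def shiftn_def)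
  have inner: "(\<integral>\<^sup>+u. (if Q z u \<and> u n \<le> \<phi> z u then 1 else 0) \<partial>?PE) = (\<integral>\<^sup>+u. (if Q z u then Fe (\<phi> z u) else 0) \<partial>?PE)" for z
  proof -
    let ?K = "\<lambda>(w1, w2::nat\<Rightarrow>real). if Q z (shiftn n w1) \<and> w2 (Suc n) \<le> \<phi> z (shiftn n w1) then 1 else (0::ennreal)"
    have Qz[measurable]: "Measurable.pred (PiM UNIV (\<lambda>_. borel)) (Q z)"
      using measurable_compose[OF measurable_Pair1'[of z "borel \<Otimes>\<^sub>M borel" "PiM UNIV (\<lambda>_. borel)"] Qm] by (simp add: space_pair_measure)
    have \<phi>z[measurable]: "\<phi> z \<in> borel_measurable (PiM UNIV (\<lambda>_. borel))"
      using measurable_compose[OF measurable_Pair1'[of z "borel \<Otimes>\<^sub>M borel" "PiM UNIV (\<lambda>_. borel)"] \<phi>m] by (simp add: space_pair_measure)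
    have t1: "Measurable.pred (PiM UNIV (\<lambda>_. borel)) (\<lambda>u. Q z u)" by measurable
    have t21: "(\<lambda>u. u n) \<in> borel_measurable (PiM UNIV (\<lambda>_. borel::real measure))" by measurable
    have t22: "(\<lambda>u. \<phi> z u) \<in> borel_measurable (PiM UNIV (\<lambda>_. borel::real measure))" by measurable
    have t2[measurable]: "Measurable.pred (PiM UNIV (\<lambda>_. borel)) (\<lambda>u. u n \<le> \<phi> z u)"
      using pred_sets1[OF borel_measurable_le[OF t21 t22] measurable_ident] by simp
    have t3: "(\<lambda>u. if Q z u \<and> u n \<le> \<phi> z u then 1 else (0::ennreal)) \<in> borel_measurable (PiM UNIV (\<lambda>_. borel))" by measurable
    have s1[measurable]: "(\<lambda>p. shiftn n (fst p)) \<in> PiM {1..n} (\<lambda>_. borel) \<Otimes>\<^sub>M PiM {Suc n} (\<lambda>_. borel) \<rightarrow>\<^sub>M PiM UNIV (\<lambda>_. borel)"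
      by measurable
    have Km[measurable]: "?K \<in> borel_measurable (PiM {1..n} (\<lambda>_. borel) \<Otimes>\<^sub>M PiM {Suc n} (\<lambda>_. borel))"
      unfolding split_beta' by measurable
    have QE: "\<And>\<omega>. Q z (Ev \<omega>) = Q z (shiftn n (?R1 \<omega>))" by (metis Qt trE)
    have \<phi>E: "\<And>\<omega>. \<phi> z (Ev \<omega>) = \<phi> z (shiftn n (?R1 \<omega>))" by (metis \<phi>t trE)
    have "(\<integral>\<^sup>+u. (if Q z u \<and> u n \<le> \<phi> z u then 1 else 0) \<partial>?PE) =
          (\<integral>\<^sup>+\<omega>. (if Q z (Ev \<omega>) \<and> Ev \<omega> n \<le> \<phi> z (Ev \<omega>) then 1 else 0) \<partial>M)"
      by (rule nn_integral_distr[OF Ev_meas], unfold measurable_distr_eq1, rule t3)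
    also have "\<dots> = (\<integral>\<^sup>+\<omega>. ?K (?R1 \<omega>, ?R2 \<omega>) \<partial>M)"
      by (intro nn_integral_cong) (simp only: QE \<phi>E, simp add: Ev_def)
    also have "\<dots> = (\<integral>\<^sup>+a. \<integral>\<^sup>+b. ?K (a, b) \<partial>distr M (PiM {Suc n} (\<lambda>_. borel)) ?R2 \<partial>distr M (PiM {1..n} (\<lambda>_. borel)) ?R1)"
      by (rule indep_nn_integral[OF R1m R2m indep_varD[OF indR] Km])
    also have "\<dots> = (\<integral>\<^sup>+a. (if Q z (shiftn n a) then Fe (\<phi> z (shiftn n a)) else 0) \<partial>distr M (PiM {1..n} (\<lambda>_. borel)) ?R1)"
    proof (intro nn_integral_cong)
      fix a assume "a \<in> space (distr M (PiM {1..n} (\<lambda>_. borel)) ?R1)"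
      then have asp: "a \<in> space (PiM {1..n} (\<lambda>_. borel::real measure))" by simp
      have Ka: "(\<lambda>b. ?K (a,b)) \<in> borel_measurable (PiM {Suc n} (\<lambda>_. borel))"
        using measurable_compose[OF measurable_Pair1'[OF asp] Km] by simp
      have "(\<integral>\<^sup>+b. ?K (a, b) \<partial>distr M (PiM {Suc n} (\<lambda>_. borel)) ?R2) = (\<integral>\<^sup>+\<omega>. ?K (a, ?R2 \<omega>) \<partial>M)"
        by (rule nn_integral_distr[OF R2m], unfold measurable_distr_eq1, rule Ka)
      also have "\<dots> = (if Q z (shiftn n a) then Fe (\<phi> z (shiftn n a)) else 0)"
      proof (cases "Q z (shiftn n a)")
        case True
        have "(\<integral>\<^sup>+\<omega>. ?K (a, ?R2 \<omega>) \<partial>M) = (\<integral>\<^sup>+\<omega>. indicator {\<omega>\<in>space M. e (Suc n) \<omega> \<le> \<phi> z (shiftn n a)} \<omega> \<partial>M)"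
          using True by (intro nn_integral_cong) (auto split: split_indicator)
        also have "\<dots> = Fe (\<phi> z (shiftn n a))"
          by (subst nn_integral_indicator) (auto simp: emeasure_e_le)
        finally show ?thesis using True by simp
      qed simp
      finally show "(\<integral>\<^sup>+b. ?K (a, b) \<partial>distr M (PiM {Suc n} (\<lambda>_. borel)) ?R2) = (if Q z (shiftn n a) then Fe (\<phi> z (shiftn n a)) else 0)" .
    qed
    also have "\<dots> = (\<integral>\<^sup>+\<omega>. (if Q z (shiftn n (?R1 \<omega>)) then Fe (\<phi> z (shiftn n (?R1 \<omega>))) else 0) \<partial>M)"
      by (rule nn_integral_distr[OF R1m], unfold measurable_distr_eq1, measurable)
    also have "\<dots> = (\<integral>\<^sup>+\<omega>. (if Q z (Ev \<omega>) then Fe (\<phi> z (Ev \<omega>)) else 0) \<partial>M)"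
      by (intro nn_integral_cong) (simp only: QE \<phi>E)
    also have "\<dots> = (\<integral>\<^sup>+u. (if Q z u then Fe (\<phi> z u) else 0) \<partial>?PE)"
      by (rule nn_integral_distr[OF Ev_meas, symmetric], unfold measurable_distr_eq1, measurable)
    finally show ?thesis .
  qed
  have H2m: "(\<lambda>(z,u). if Q z u then Fe (\<phi> z u) else 0) \<in> borel_measurable ((borel \<Otimes>\<^sub>M borel) \<Otimes>\<^sub>M PiM UNIV (\<lambda>_. borel))"
    unfolding split_beta' using Qm \<phi>m unfolding split_beta' by measurable
  have P1m: "Measurable.pred ((borel \<Otimes>\<^sub>M borel) \<Otimes>\<^sub>M PiM UNIV (\<lambda>_. borel)) (\<lambda>p. snd p n \<le> \<phi> (fst p) (snd p))"
    using pred_sets1[OF borel_measurable_le[OF _ \<phi>m[unfolded split_beta']] measurable_ident] by simp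
  have H1m: "(\<lambda>(z,u). if Q z u \<and> u n \<le> \<phi> z u then 1 else (0::ennreal)) \<in> borel_measurable ((borel \<Otimes>\<^sub>M borel) \<Otimes>\<^sub>M PiM UNIV (\<lambda>_. borel))"
    unfolding split_beta'
  proof (rule measurable_If)
    let ?S = "(borel \<Otimes>\<^sub>M borel) \<Otimes>\<^sub>M PiM UNIV (\<lambda>_. borel::real measure)"
    have a: "{p \<in> space ?S. Q (fst p) (snd p)} \<in> sets ?S" using predE[OF Qm[unfolded split_beta']] .
    have b: "{p \<in> space ?S. snd p n \<le> \<phi> (fst p) (snd p)} \<in> sets ?S" using predE[OF P1m] .
    have "{p \<in> space ?S. Q (fst p) (snd p) \<and> snd p n \<le> \<phi> (fst p) (snd p)} =
      {p \<in> space ?S. Q (fst p) (snd p)} \<inter> {p \<in> space ?S. snd p n \<le> \<phi> (fst p) (snd p)}" by blast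
    then show "{p \<in> space ?S. Q (fst p) (snd p) \<and> snd p n \<le> \<phi> (fst p) (snd p)} \<in> sets ?S"
      using sets.Int[OF a b] by simp
  qed (rule measurable_const; simp)+
  have "(\<integral>\<^sup>+\<omega>. (if Q (Zv \<omega>) (Ev \<omega>) then Fe (\<phi> (Zv \<omega>) (Ev \<omega>)) else 0) \<partial>M)
     = (\<integral>\<^sup>+z. \<integral>\<^sup>+u. (if Q z u then Fe (\<phi> z u) else 0) \<partial>?PE \<partial>?PZ)"
    using indep_nn_integral[OF Zv_meas Ev_meas indZE H2m] by (simp only: prod.case)
  also have "\<dots> = (\<integral>\<^sup>+z. \<integral>\<^sup>+u. (if Q z u \<and> u n \<le> \<phi> z u then 1 else 0) \<partial>?PE \<partial>?PZ)"
    by (simp only: inner)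
  also have "\<dots> = (\<integral>\<^sup>+\<omega>. (if Q (Zv \<omega>) (Ev \<omega>) \<and> Ev \<omega> n \<le> \<phi> (Zv \<omega>) (Ev \<omega>) then 1 else 0) \<partial>M)"
    using indep_nn_integral[OF Zv_meas Ev_meas indZE H1m] by (simp only: prod.case)
  also have "\<dots> = (\<integral>\<^sup>+\<omega>. indicator {\<omega>\<in>space M. Q (Zv \<omega>) (Ev \<omega>) \<and> e (Suc n) \<omega> \<le> \<phi> (Zv \<omega>) (Ev \<omega>)} \<omega> \<partial>M)"
    by (intro nn_integral_cong) (auto simp: Ev_def split: split_indicator)
  also have "\<dots> = emeasure M {\<omega>\<in>space M. Q (Zv \<omega>) (Ev \<omega>) \<and> e (Suc n) \<omega> \<le> \<phi> (Zv \<omega>) (Ev \<omega>)}"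
    by (rule nn_integral_indicator) (use Qm \<phi>m in measurable)
  finally show ?thesis .
qed

end


context ARS begin

definition "Gf n y = measure M {\<omega>\<in>space M. (\<forall>i\<in>{1..n}. X i \<omega> \<le> x) \<and> X n \<omega> \<le> fst y \<and> e n \<omega> \<le> snd y}"

lemma Ind_step:
  fixes c b :: real
  shows "(\<integral>\<^sup>+\<omega>. (if (\<forall>i\<in>{1..n}. X i \<omega> \<le> x) then Fe (min (c - r * X n \<omega> - s * e n \<omega>) b) else 0) \<partial>M)
       = emeasure M {\<omega>\<in>space M. (\<forall>i\<in>{1..n}. X i \<omega> \<le> x) \<and> X (Suc n) \<omega> \<le> c \<and> e (Suc n) \<omega> \<le> b}"
proof -
  define Q where "Q z u = (\<forall>i\<in>{1..n}. xs r s z u i \<le> x)" for z u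
  define \<phi> where "\<phi> z u = min (c - r * xs r s z u n - s * es z u n) b" for z u
  have Qm: "Measurable.pred ((borel \<Otimes>\<^sub>M borel) \<Otimes>\<^sub>M PiM UNIV (\<lambda>_. borel)) (\<lambda>(z,u). Q z u)"
    unfolding Q_def split_beta' by measurable
  have \<phi>m: "(\<lambda>(z,u). \<phi> z u) \<in> borel_measurable ((borel \<Otimes>\<^sub>M borel) \<Otimes>\<^sub>M PiM UNIV (\<lambda>_. borel))"
    unfolding \<phi>_def split_beta' by measurable
  have Qt: "\<And>z u. Q z (tr n u) = Q z u" unfolding Q_def by (simp add: xs_tr)
  have \<phi>t: "\<And>z u. \<phi> z (tr n u) = \<phi> z u" unfolding \<phi>_def by (simp add: xs_tr es_tr)
  have "(\<integral>\<^sup>+\<omega>. (if (\<forall>i\<in>{1..n}. X i \<omega> \<le> x) then Fe (min (c - r * X n \<omega> - s * e n \<omega>) b) else 0) \<partial>M)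
      = (\<integral>\<^sup>+\<omega>. (if Q (Zv \<omega>) (Ev \<omega>) then Fe (\<phi> (Zv \<omega>) (Ev \<omega>)) else 0) \<partial>M)"
    by (intro nn_integral_cong) (simp add: Q_def \<phi>_def X_eq e_eq[symmetric])
  also have "\<dots> = emeasure M {\<omega>\<in>space M. Q (Zv \<omega>) (Ev \<omega>) \<and> e (Suc n) \<omega> \<le> \<phi> (Zv \<omega>) (Ev \<omega>)}"
    by (rule Ind[OF Qm \<phi>m Qt \<phi>t])
  also have "{\<omega>\<in>space M. Q (Zv \<omega>) (Ev \<omega>) \<and> e (Suc n) \<omega> \<le> \<phi> (Zv \<omega>) (Ev \<omega>)}
     = {\<omega>\<in>space M. (\<forall>i\<in>{1..n}. X i \<omega> \<le> x) \<and> X (Suc n) \<omega> \<le> c \<and> e (Suc n) \<omega> \<le> b}"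
  proof -
    { fix \<omega> assume \<omega>: "\<omega> \<in> space M"
      have QQ: "Q (Zv \<omega>) (Ev \<omega>) = (\<forall>i\<in>{1..n}. X i \<omega> \<le> x)"
        by (simp add: Q_def X_eq[OF \<omega>])
      have PP: "\<phi> (Zv \<omega>) (Ev \<omega>) = min (c - r * X n \<omega> - s * e n \<omega>) b"
        by (simp add: \<phi>_def X_eq[OF \<omega>] e_eq[symmetric])
      have R: "X (Suc n) \<omega> = r * X n \<omega> + e (Suc n) \<omega> + s * e n \<omega>"
        using recX[OF \<omega>, of n] by simp
      have "(Q (Zv \<omega>) (Ev \<omega>) \<and> e (Suc n) \<omega> \<le> \<phi> (Zv \<omega>) (Ev \<omega>)) =
            ((\<forall>i\<in>{1..n}. X i \<omega> \<le> x) \<and> X (Suc n) \<omega> \<le> c \<and> e (Suc n) \<omega> \<le> b)"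
        unfolding QQ PP R by auto
    }
    then show ?thesis by auto
  qed
  finally show ?thesis .
qed

end


context ARS begin

lemma Gf_set_meas[measurable]: "{\<omega>\<in>space M. (\<forall>i\<in>{1..n}. X i \<omega> \<le> x) \<and> X n \<omega> \<le> a \<and> e n \<omega> \<le> b} \<in> sets M"
  by measurable

lemma t_integral:
  fixes c b E Xn :: real
  shows "(\<integral>\<^sup>+t. (if Xn \<le> t then ennreal (if (c - s*E - b)/r < t then f (c - r*t - s*E) else 0) else 0) \<partial>lborel)
     = ennreal (1/r) * Fe (min (c - r * Xn - s * E) b)"
proof -
  let ?F = "\<lambda>t. (if Xn \<le> t then ennreal (if (c - s*E - b)/r < t then f (c - r*t - s*E) else 0) else 0)"
  have Fm: "?F \<in> borel_measurable borel" by measurable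
  have rr: "r \<noteq> 0" "-1/r \<noteq> 0" using r by auto
  have "(\<integral>\<^sup>+t. ?F t \<partial>lborel) = ennreal \<bar>-1/r\<bar> * (\<integral>\<^sup>+u. ?F ((c - s*E)/r + (-1/r) * u) \<partial>lborel)"
    by (rule nn_integral_real_affine[OF Fm rr(2)])
  also have "\<bar>-1/r\<bar> = 1/r" using r by simp
  also have "(\<integral>\<^sup>+u. ?F ((c - s*E)/r + (-1/r) * u) \<partial>lborel)
      = (\<integral>\<^sup>+u. (if u \<le> c - r * Xn - s * E then (if u < b then ennreal (f u) else 0) else 0) \<partial>lborel)"
  proof (intro nn_integral_cong)
    fix u :: real
    have eq: "(c - s*E)/r + (-1/r) * u = (c - s*E - u)/r" using r by (simp add: field_simps)
    have i1: "(Xn \<le> (c - s*E - u)/r) = (u \<le> c - r * Xn - s * E)"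
      using r by (simp add: pos_le_divide_eq algebra_simps)
    have i2: "((c - s*E - b)/r < (c - s*E - u)/r) = (u < b)"
      using r by (simp add: divide_less_cancel)
    have i3: "c - r*((c - s*E - u)/r) - s*E = u" using r by (simp add: field_simps)
    show "?F ((c - s*E)/r + (-1/r) * u) = (if u \<le> c - r * Xn - s * E then (if u < b then ennreal (f u) else 0) else 0)"
      unfolding eq i1 i2 i3 by simp
  qed
  also have "\<dots> = Fe (min (c - r * Xn - s * E) b)"
    unfolding Fe_def
    by (intro nn_integral_cong_AE eventually_mono[OF AE_lborel_singleton[of b]]) auto
  finally show ?thesis .
qed

end


context ARS begin

lemma Kop_step: "Kop r s f x (Gf n) y = Gf (Suc n) y"
proof -
  define c where "c = min (fst y) x"
  define b where "b = snd y"
  define g where "g t z1 = (if (c - s*z1 - b)/r < t then f (c - r*t - s*z1) else 0)" for t z1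
  have g_eq: "\<And>t z1. indicator {z1. (min (fst y) x - s*z1 - snd y)/r < t} z1 * f (min (fst y) x - r*t - s*z1) = g t z1"
    by (simp add: g_def c_def b_def indicator_def)
  have gm[measurable]: "(\<lambda>p. g (fst p) (snd p)) \<in> borel_measurable (borel \<Otimes>\<^sub>M borel)"
    unfolding g_def by measurable
  have gm1[measurable]: "g t \<in> borel_measurable borel" for t
    unfolding g_def by measurable
  have gnn: "g t z1 \<ge> 0" for t z1 by (simp add: g_def fnn)
  define S where "S t = {\<omega>\<in>space M. (\<forall>i\<in>{1..n}. X i \<omega> \<le> x) \<and> X n \<omega> \<le> t}" for t
  have Sm[measurable]: "S t \<in> sets M" for t unfolding S_def by measurable
  define N where "N t = distr (density M (indicator (S t))) borel (e n)" for t
  define J where "J t = (\<integral>\<^sup>+\<omega>. (if (\<forall>i\<in>{1..n}. X i \<omega> \<le> x) \<and> X n \<omega> \<le> t then ennreal (g t (e n \<omega>)) else 0) \<partial>M)" for t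
  have IM: "interval_measure (\<lambda>z1. Gf n (t, z1)) = N t" for t
  proof -
    have sN: "sets (N t) = sets borel" by (simp add: N_def)
    have emN: "emeasure (N t) B = emeasure M (S t \<inter> (e n -` B \<inter> space M))" if "B \<in> sets borel" for B
      using that unfolding N_def by (simp add: emeasure_distr emeasure_restricted)
    have "finite_measure (N t)"
    proof (rule finite_measureI)
      have "space (N t) = UNIV" by (simp add: N_def)
      then have "emeasure (N t) (space (N t)) = emeasure M (S t \<inter> (e n -` UNIV \<inter> space M))"
        using emN[of UNIV] by simp
      also have "\<dots> \<le> emeasure M (space M)" by (intro emeasure_mono) (auto simp: S_def)
      finally show "emeasure (N t) (space (N t)) \<noteq> \<infinity>"
        by (auto simp: top_unique)
    qed
    then have fb: "finite_borel_measure (N t)"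
      unfolding finite_borel_measure_def finite_borel_measure_axioms_def using sN by simp
    have "cdf (N t) = (\<lambda>z1. Gf n (t, z1))"
    proof
      fix z1
      have "cdf (N t) z1 = enn2real (emeasure (N t) {..z1})" by (simp add: cdf_def measure_def)
      also have "\<dots> = enn2real (emeasure M (S t \<inter> (e n -` {..z1} \<inter> space M)))" by (simp add: emN)
      also have "S t \<inter> (e n -` {..z1} \<inter> space M) = {\<omega>\<in>space M. (\<forall>i\<in>{1..n}. X i \<omega> \<le> x) \<and> X n \<omega> \<le> fst (t, z1) \<and> e n \<omega> \<le> snd (t, z1)}"
        by (auto simp: S_def)
      finally show "cdf (N t) z1 = Gf n (t, z1)" by (simp add: Gf_def measure_def)
    qed
    then show ?thesis using interval_measure_cdf[OF fb] by simp
  qed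
  have inner: "(\<integral>z1. g t z1 \<partial>N t) = enn2real (J t)" for t
  proof -
    have "(\<integral>z1. g t z1 \<partial>N t) = enn2real (\<integral>\<^sup>+z1. ennreal (g t z1) \<partial>N t)"
      by (rule integral_eq_nn_integral) (auto simp: N_def gnn)
    also have "(\<integral>\<^sup>+z1. ennreal (g t z1) \<partial>N t) = (\<integral>\<^sup>+\<omega>. ennreal (g t (e n \<omega>)) \<partial>density M (indicator (S t)))"
      unfolding N_def by (rule nn_integral_distr) auto
    also have "\<dots> = (\<integral>\<^sup>+\<omega>. indicator (S t) \<omega> * ennreal (g t (e n \<omega>)) \<partial>M)"
      by (rule nn_integral_density) auto
    also have "\<dots> = J t"
      unfolding J_def by (intro nn_integral_cong) (auto simp: S_def split: split_indicator)
    finally show ?thesis .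
  qed
  have Kop_eq: "Kop r s f x (Gf n) y = r * (\<integral>t. enn2real (J t) \<partial>lborel)"
    unfolding Kop_def g_eq IM inner ..
  have pm1: "(\<lambda>p. (fst p, e n (snd p))) \<in> borel \<Otimes>\<^sub>M M \<rightarrow>\<^sub>M borel \<Otimes>\<^sub>M borel" by measurable
  have pm2: "(\<lambda>p. (fst p, e n (snd p))) \<in> lborel \<Otimes>\<^sub>M M \<rightarrow>\<^sub>M borel \<Otimes>\<^sub>M borel" by measurable
  have gm2[measurable]: "(\<lambda>p. g (fst p) (e n (snd p))) \<in> borel_measurable (borel \<Otimes>\<^sub>M M)"
    using measurable_compose[OF pm1 gm] by simp
  have gm3[measurable]: "(\<lambda>p. g (fst p) (e n (snd p))) \<in> borel_measurable (lborel \<Otimes>\<^sub>M M)"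
    using measurable_compose[OF pm2 gm] by simp
  have Jm[measurable]: "J \<in> borel_measurable borel"
    unfolding J_def by measurable
  interpret PS: pair_sigma_finite lborel M ..
  have "(\<integral>\<^sup>+t. J t \<partial>lborel) = (\<integral>\<^sup>+\<omega>. \<integral>\<^sup>+t. (if (\<forall>i\<in>{1..n}. X i \<omega> \<le> x) \<and> X n \<omega> \<le> t then ennreal (g t (e n \<omega>)) else 0) \<partial>lborel \<partial>M)"
    unfolding J_def
    by (rule PS.Fubini'[symmetric]) (unfold split_beta', measurable)
  also have "\<dots> = (\<integral>\<^sup>+\<omega>. (if (\<forall>i\<in>{1..n}. X i \<omega> \<le> x) then ennreal (1/r) * Fe (min (c - r * X n \<omega> - s * e n \<omega>) b) else 0) \<partial>M)"
  proof (intro nn_integral_cong)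
    fix \<omega>
    show "(\<integral>\<^sup>+t. (if (\<forall>i\<in>{1..n}. X i \<omega> \<le> x) \<and> X n \<omega> \<le> t then ennreal (g t (e n \<omega>)) else 0) \<partial>lborel)
       = (if (\<forall>i\<in>{1..n}. X i \<omega> \<le> x) then ennreal (1/r) * Fe (min (c - r * X n \<omega> - s * e n \<omega>) b) else 0)"
    proof (cases "\<forall>i\<in>{1..n}. X i \<omega> \<le> x")
      case True
      have "(\<integral>\<^sup>+t. (if X n \<omega> \<le> t then ennreal (g t (e n \<omega>)) else 0) \<partial>lborel) = ennreal (1/r) * Fe (min (c - r * X n \<omega> - s * e n \<omega>) b)"
        unfolding g_def by (rule t_integral)
      then show ?thesis using True by simp
    next
      case False
      then have F: "(\<forall>i\<in>{1..n}. X i \<omega> \<le> x) = False" by simp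
      show ?thesis by (simp only: F) simp
    qed
  qed
  also have "\<dots> = ennreal (1/r) * (\<integral>\<^sup>+\<omega>. (if (\<forall>i\<in>{1..n}. X i \<omega> \<le> x) then Fe (min (c - r * X n \<omega> - s * e n \<omega>) b) else 0) \<partial>M)"
    by (subst nn_integral_cmult[symmetric]) (measurable, auto intro!: nn_integral_cong)
  also have "\<dots> = ennreal (1/r) * emeasure M {\<omega>\<in>space M. (\<forall>i\<in>{1..n}. X i \<omega> \<le> x) \<and> X (Suc n) \<omega> \<le> c \<and> e (Suc n) \<omega> \<le> b}"
    by (simp only: Ind_step)
  also have "{\<omega>\<in>space M. (\<forall>i\<in>{1..n}. X i \<omega> \<le> x) \<and> X (Suc n) \<omega> \<le> c \<and> e (Suc n) \<omega> \<le> b}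
     = {\<omega>\<in>space M. (\<forall>i\<in>{1..Suc n}. X i \<omega> \<le> x) \<and> X (Suc n) \<omega> \<le> fst y \<and> e (Suc n) \<omega> \<le> snd y}"
    by (auto simp: c_def b_def le_Suc_eq)
  finally have JI: "(\<integral>\<^sup>+t. J t \<partial>lborel) = ennreal (1/r) * ennreal (Gf (Suc n) y)"
    by (simp add: Gf_def emeasure_eq_measure)
  have "AE t in lborel. J t \<noteq> \<infinity>"
    by (rule nn_integral_PInf_AE) (auto simp: JI ennreal_mult_eq_top_iff)
  then have "(\<integral>\<^sup>+t. ennreal (enn2real (J t)) \<partial>lborel) = (\<integral>\<^sup>+t. J t \<partial>lborel)"
    by (intro nn_integral_cong_AE) (auto simp: less_top)
  then have "(\<integral>t. enn2real (J t) \<partial>lborel) = enn2real (ennreal (1/r) * ennreal (Gf (Suc n) y))"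
    by (subst integral_eq_nn_integral) (auto simp: JI)
  also have "\<dots> = (1/r) * Gf (Suc n) y"
    using r by (simp add: enn2real_mult Gf_def)
  finally show ?thesis using r by (simp add: Kop_eq)
qed

end


context ARS begin

lemma Gf0: "(\<lambda>z. measure M {\<omega> \<in> space M. X 0 \<omega> \<le> fst z \<and> e 0 \<omega> \<le> snd z}) = Gf 0"
  by (simp add: Gf_def fun_eq_iff)

lemma iter: "(Kop r s f x ^^ n) (Gf 0) = Gf n"
proof (induction n)
  case (Suc n)
  have "(Kop r s f x ^^ Suc n) (Gf 0) = Kop r s f x (Gf n)" using Suc by simp
  also have "\<dots> = Gf (Suc n)" by (rule ext) (rule Kop_step)
  finally show ?case .
qed simp

lemma run_max_set: "{\<omega>\<in>space M. run_max X n \<omega> \<le> ereal x} = {\<omega>\<in>space M. \<forall>i\<in>{1..n}. X i \<omega> \<le> x}"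
proof (cases "n = 0")
  case False
  then have "finite ((\<lambda>i. X i \<omega>) ` {1..n})" "(\<lambda>i. X i \<omega>) ` {1..n} \<noteq> {}" for \<omega> by auto
  then show ?thesis using False by (auto simp: run_max_def Max_le_iff)
qed (simp add: run_max_def)

lemma lim: "((\<lambda>y. Gf n y) \<longlongrightarrow> measure M {\<omega>\<in>space M. \<forall>i\<in>{1..n}. X i \<omega> \<le> x}) (at_top \<times>\<^sub>F at_top)"
proof -
  let ?P = "\<lambda>\<omega>. \<forall>i\<in>{1..n}. X i \<omega> \<le> x"
  let ?L = "measure M {\<omega>\<in>space M. ?P \<omega>}"
  define B where "B k = {\<omega>\<in>space M. ?P \<omega> \<and> X n \<omega> \<le> real k \<and> e n \<omega> \<le> real k}" for k :: nat
  have Bm: "B k \<in> sets M" for k unfolding B_def by measurable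
  have "(\<lambda>k. measure M (B k)) \<longlonglongrightarrow> measure M (\<Union>k. B k)"
    by (rule finite_Lim_measure_incseq) (auto simp: Bm incseq_def B_def intro: order_trans)
  moreover have "(\<Union>k. B k) = {\<omega>\<in>space M. ?P \<omega>}"
  proof safe
    fix \<omega> assume "\<omega> \<in> space M" "?P \<omega>"
    obtain k :: nat where "max (X n \<omega>) (e n \<omega>) \<le> real k" using real_arch_simple by blast
    then show "\<omega> \<in> (\<Union>k. B k)" using \<open>\<omega> \<in> space M\<close> \<open>?P \<omega>\<close> by (auto simp: B_def)
  qed (auto simp: B_def)
  ultimately have lim: "(\<lambda>k. measure M (B k)) \<longlonglongrightarrow> ?L" by simp
  show ?thesis
  proof (rule tendstoI)
    fix \<epsilon> :: real assume "0 < \<epsilon>"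
    with lim have "eventually (\<lambda>k. dist (measure M (B k)) ?L < \<epsilon>) sequentially"
      by (rule tendstoD)
    then obtain K where K: "dist (measure M (B K)) ?L < \<epsilon>"
      by (auto simp: eventually_sequentially)
    show "eventually (\<lambda>y. dist (Gf n y) ?L < \<epsilon>) (at_top \<times>\<^sub>F at_top)"
      unfolding eventually_prod_filter
    proof (intro exI conjI allI impI)
      show "eventually (\<lambda>a. real K \<le> a) at_top" by (rule eventually_ge_at_top)
      show "eventually (\<lambda>a. real K \<le> a) at_top" by (rule eventually_ge_at_top)
      fix a b :: real assume ab: "real K \<le> a" "real K \<le> b"
      have "measure M (B K) \<le> Gf n (a, b)"
        unfolding Gf_def using ab by (intro finite_measure_mono) (auto simp: B_def)
      moreover have "Gf n (a, b) \<le> ?L"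
        unfolding Gf_def by (intro finite_measure_mono) auto
      moreover have "measure M (B K) \<le> ?L"
        by (intro finite_measure_mono) (auto simp: B_def)
      ultimately show "dist (Gf n (a, b)) ?L < \<epsilon>" using K by (simp add: dist_real_def)
    qed
  qed
qed

end

theorem theorem2p2:
  fixes M :: "'a measure" and r s x :: real and f :: "real \<Rightarrow> real"
    and e X :: "nat \<Rightarrow> 'a \<Rightarrow> real"
  assumes "prob_space M"
    and "r > 0"
    and "\<And>t. f t \<ge> 0" and "f \<in> borel_measurable borel"
    and "\<And>i. distributed M lborel (e i) (\<lambda>t. ennreal (f t))"
    and "prob_space.indep_vars M (\<lambda>_. borel) e UNIV"
    and "X 0 \<in> borel_measurable M"
    and "prob_space.indep_set M
           {(\<lambda>\<omega>. (X 0 \<omega>, e 0 \<omega>)) -` A \<inter> space M | A. A \<in> sets (borel :: (real \<times> real) measure)}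
           {(\<lambda>\<omega> i. e (Suc i) \<omega>) -` A \<inter> space M | A. A \<in> sets (PiM (UNIV :: nat set) (\<lambda>_. borel :: real measure))}"
    and "\<And>i \<omega>. \<omega> \<in> space M \<Longrightarrow> X (Suc i) \<omega> - r * X i \<omega> = e (Suc i) \<omega> + s * e i \<omega>"
  shows "\<forall>n. ((\<lambda>y. (Kop r s f x ^^ n)
                  (\<lambda>z. measure M {\<omega> \<in> space M. X 0 \<omega> \<le> fst z \<and> e 0 \<omega> \<le> snd z}) y)
             \<longlongrightarrow> measure M {\<omega> \<in> space M. run_max X n \<omega> \<le> ereal x})
           (at_top \<times>\<^sub>F at_top)"
proof
  fix n
  interpret ARS M r s x f e X
    by (rule ARS.intro[OF assms(1)], unfold_locales) (use assms in auto)
  show "((\<lambda>y. (Kop r s f x ^^ n)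
                  (\<lambda>z. measure M {\<omega> \<in> space M. X 0 \<omega> \<le> fst z \<and> e 0 \<omega> \<le> snd z}) y)
             \<longlongrightarrow> measure M {\<omega> \<in> space M. run_max X n \<omega> \<le> ereal x})
           (at_top \<times>\<^sub>F at_top)"
    unfolding Gf0 iter run_max_set by (rule lim)
qed


end
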